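(* Let $k\ge 2$, $n\ge1$, and let $L_n$ and $\varphi:L_n\to E^{n-1}$ be as in the context. Then $\varphi$ is a bijection.
   Context: $E=\{0,\dots,k-1\}$. For $\mathbf a\in E^n$, $w(\mathbf a)=a_1+\dots+a_n$, and $\mathcal B_t=\{\mathbf a\in E^n: w(\mathbf a)=t\}$. Let $g=\lfloor n(k-1)/2\rfloor$ and $C_i=\{\mathbf a\in E^n: a_1=i\}$. Define $L_n=(\mathcal B_0\cup\dots\cup\mathcal B_g)\cap(C_0\cup C_{k-1})$ if $n(k-1)$ is odd, and $L_n=((\mathcal B_0\cup\dots\cup\mathcal B_{g-1})\cap(C_0\cup C_{k-1}))\cup(\mathcal B_g\cap C_0)$ if $n(k-1)$ is even. For $a\in E$ let $\overline a=k-1-a$. Define $\varphi(a_1,\dots,a_n)=(a_2,\dots,a_n)$ if $a_1=0$ and $\varphi(a_1,\dots,a_n)=(\overline{a}_2,\dots,\overline{a}_n)$ if $a_1=k-1$. *)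

theory Defs
  imports Main
begin

text \<open>Elements of E^n are lists of length n with entries in E = {0,...,k-1};
  the first list entry is a_1.\<close>

definition Evec :: "nat \<Rightarrow> nat \<Rightarrow> nat list set" where
  "Evec k n = {a. length a = n \<and> (\<forall>x\<in>set a. x < k)}"

definition wt :: "nat list \<Rightarrow> nat" where
  "wt a = sum_list a"

definition Bset :: "nat \<Rightarrow> nat \<Rightarrow> nat \<Rightarrow> nat list set" where
  "Bset k n t = {a \<in> Evec k n. wt a = t}"

definition Cset :: "nat \<Rightarrow> nat \<Rightarrow> nat \<Rightarrow> nat list set" where
  "Cset k n i = {a \<in> Evec k n. hd a = i}"

definition gval :: "nat \<Rightarrow> nat \<Rightarrow> nat" where
  "gval k n = (n * (k - 1)) div 2"

definition Lset :: "nat \<Rightarrow> nat \<Rightarrow> nat list set" where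
  "Lset k n =
    (if odd (n * (k - 1))
     then (\<Union>t\<in>{0..gval k n}. Bset k n t) \<inter> (Cset k n 0 \<union> Cset k n (k - 1))
     else ((\<Union>t\<in>{0..<gval k n}. Bset k n t) \<inter> (Cset k n 0 \<union> Cset k n (k - 1)))
          \<union> (Bset k n (gval k n) \<inter> Cset k n 0))"

definition cbar :: "nat \<Rightarrow> nat \<Rightarrow> nat" where
  "cbar k a = k - 1 - a"

definition phi :: "nat \<Rightarrow> nat list \<Rightarrow> nat list" where
  "phi k a = (if hd a = 0 then tl a else map (cbar k) (tl a))"

end

theory Submission
  imports Defs
begin

lemma Lset_char:
  assumes "k \<ge> 2"
  shows "a \<in> Lset k n \<longleftrightarrow> a \<in> Evec k n \<and>
     (hd a = 0 \<and> wt a \<le> gval k n \<or>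
      hd a = k - 1 \<and> (wt a < gval k n \<or> odd (n * (k - 1)) \<and> wt a = gval k n))"
proof (cases "odd (n * (k - 1))")
  case True
  then show ?thesis using assms unfolding Lset_def Bset_def Cset_def
    by (auto simp: le_less)
next
  case False
  then show ?thesis using assms unfolding Lset_def Bset_def Cset_def
    by (auto simp: le_less)
qed

lemma cbar_sum:
  assumes "\<forall>x\<in>set b. x < k"
  shows "sum_list (map (cbar k) b) + sum_list b = length b * (k - 1)"
  using assms by (induction b) (auto simp: cbar_def)

lemma cbar_inv: "\<forall>x\<in>set b. x < k \<Longrightarrow> map (cbar k) (map (cbar k) b) = b"
  by (induction b) (auto simp: cbar_def)

lemma cbar_lt: "k \<ge> 1 \<Longrightarrow> \<forall>x\<in>set (map (cbar k) b). x < k"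
  by (auto simp: cbar_def)

lemma ar1: "(g::nat) = N div 2 \<Longrightarrow> w \<le> N \<Longrightarrow> (N - w < g \<or> odd N \<and> N - w = g) \<Longrightarrow> \<not> w \<le> g"
  by presburger

lemma ar2: "(g::nat) = N div 2 \<Longrightarrow> w \<le> N \<Longrightarrow> \<not> w \<le> g \<Longrightarrow> (N - w < g \<or> odd N \<and> N - w = g)"
  by presburger

theorem corollary1:
  fixes k n :: nat
  assumes "k \<ge> 2" and "n \<ge> 1"
  shows "bij_betw (phi k) (Lset k n) (Evec k (n - 1))"
proof -
  define g where "g = gval k n"
  define N where "N = n * (k - 1)"
  have gN: "g = N div 2" by (simp add: g_def N_def gval_def)
  have k1: "k - 1 \<noteq> 0" using assms by simp
  have Nsplit: "N = (k - 1) + (n - 1) * (k - 1)"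
    using assms(2) unfolding N_def
    by (metis add.commute mult.commute mult_Suc_right Suc_diff_1 le_less_trans less_numeral_extra(1) linorder_not_less)
  define psi where "psi b = (if wt b \<le> g then 0 # b else (k - 1) # map (cbar k) b)" for b
  have wtc: "wt ((k - 1) # map (cbar k) b) = N - wt b" "wt b \<le> (n-1)*(k-1)"
    if "b \<in> Evec k (n - 1)" for b
  proof -
    have h: "sum_list (map (cbar k) b) + sum_list b = (n - 1) * (k - 1)"
      using cbar_sum[of b k] that by (auto simp: Evec_def)
    { fix M assume "sum_list (map (cbar k) b) + sum_list b = M"
      hence "k - 1 + sum_list (map (cbar k) b) = (k - 1 + M) - sum_list b \<and> sum_list b \<le> M" by linarith
    } note * = this
    show "wt ((k - 1) # map (cbar k) b) = N - wt b" "wt b \<le> (n-1)*(k-1)"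
      using *[OF h] Nsplit by (simp_all add: wt_def)
  qed
  show ?thesis
  proof (rule bij_betw_byWitness[where f'=psi])
    show "\<forall>a\<in>Lset k n. psi (phi k a) = a"
    proof
      fix a assume a: "a \<in> Lset k n"
      hence ev: "a \<in> Evec k n" and c: "hd a = 0 \<and> wt a \<le> g \<or>
        hd a = k - 1 \<and> (wt a < g \<or> odd N \<and> wt a = g)"
        using Lset_char[OF assms(1)] g_def N_def by auto
      obtain x b where ab: "a = x # b" using ev assms(2) unfolding Evec_def
        by (cases a) auto
      have bE: "b \<in> Evec k (n - 1)" and xk: "x < k" using ev ab by (auto simp: Evec_def)
      show "psi (phi k a) = a"
      proof (cases "x = 0")
        case True
        then show ?thesis using c ab by (auto simp: psi_def phi_def wt_def)
      next
        case False
        hence x: "x = k - 1" and w: "wt a < g \<or> odd N \<and> wt a = g" using c ab by auto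
        have ph: "phi k a = map (cbar k) b" using False ab by (simp add: phi_def)
        have bm: "map (cbar k) b \<in> Evec k (n - 1)" using bE assms(1) by (auto simp: Evec_def cbar_def)
        have "wt a = N - wt (map (cbar k) b)" using wtc(1)[OF bm] x ab cbar_inv[of b k] bE
          by (simp add: Evec_def)
        moreover have "wt (map (cbar k) b) \<le> (n-1)*(k-1)" using wtc(2)[OF bm] .
        ultimately have e: "wt a = N - wt (map (cbar k) b)" and le: "wt (map (cbar k) b) \<le> N" using Nsplit by linarith+
        have "\<not> wt (map (cbar k) b) \<le> g" using ar1[OF gN le] w unfolding e .
        then show ?thesis using ph x ab cbar_inv[of b k] bE by (simp add: psi_def Evec_def)
      qed
    qed
    show "\<forall>b\<in>Evec k (n - 1). phi k (psi b) = b"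
      using k1 cbar_inv by (auto simp: psi_def phi_def Evec_def)
    show "phi k ` Lset k n \<subseteq> Evec k (n - 1)"
    proof
      fix y assume "y \<in> phi k ` Lset k n"
      then obtain a where a: "a \<in> Lset k n" "y = phi k a" by auto
      hence "a \<in> Evec k n" using Lset_char[OF assms(1)] by auto
      then show "y \<in> Evec k (n - 1)" using a(2) assms
        by (cases a) (auto simp: phi_def Evec_def cbar_def)
    qed
    show "psi ` Evec k (n - 1) \<subseteq> Lset k n"
    proof
      fix y assume "y \<in> psi ` Evec k (n - 1)"
      then obtain b where b: "b \<in> Evec k (n - 1)" "y = psi b" by auto
      show "y \<in> Lset k n"
      proof (cases "wt b \<le> g")
        case True
        then show ?thesis using b assms Lset_char[OF assms(1), of "0 # b" n]
          by (auto simp: psi_def Evec_def wt_def g_def)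
      next
        case False
        have "wt ((k - 1) # map (cbar k) b) = N - wt b" "wt b \<le> (n-1)*(k-1)" using wtc b(1) by auto
        hence e: "wt ((k - 1) # map (cbar k) b) = N - wt b" and le: "wt b \<le> N" using Nsplit by linarith+
        have w: "wt ((k - 1) # map (cbar k) b) < g \<or> odd N \<and> wt ((k - 1) # map (cbar k) b) = g"
          unfolding e using ar2[OF gN le False] .
        have "(k - 1) # map (cbar k) b \<in> Evec k n" using b(1) assms
          by (auto simp: Evec_def cbar_def)
        then show ?thesis using b False w Lset_char[OF assms(1), of "(k - 1) # map (cbar k) b" n]
          by (auto simp: psi_def g_def N_def)
      qed
    qed
  qed
qed

end
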